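(* Let $p$ be an odd prime and let $n,s$ be positive integers such that $2n/s\geq 3$ is an odd integer; put $q=p^n$, $d=p^s$. Fix $\mu\in\mathbb{F}_{q^2}\setminus\mathbb{F}_q$ such that $\mu^d=u_1+u_2\mu$ with $u_1,u_2\in\mathbb{F}_q$ and $u_2$ a $(d-1)$-th power in $\mathbb{F}_{q^2}$. Let \[ J=\{(a^d+a,\,x_1+x_2\mu): a,x_1\in\mathbb{F}_q,\ x_2\in\mathbb{F}_q^*\},\qquad K=\bigcup_{\beta\in\mathbb{F}_q}\phi_{(\beta\mu)^d+\beta\mu}(J). \] Then the subgraph $\mathcal{A}_{q^2,d}[K]$ of $\mathcal{A}_{q^2,d}$ induced by $K$ satisfies $\chi(\mathcal{A}_{q^2,d}[K])\leq 2q$.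
   Context: The map $x\mapsto x^d+x$ is a bijection of $\mathbb{F}_{q^2}$. The graph $\mathcal{A}_{q^2,d}$ has vertex set $\mathbb{F}_{q^2}\times\mathbb{F}_{q^2}$; writing vertices as $(a^d+a,x)$ and $(b^d+b,y)$ with $a,b,x,y\in\mathbb{F}_{q^2}$ (uniquely), two distinct vertices are adjacent iff $a^db+ab^d=x+y$. For $k=\alpha^d+\alpha\in\mathbb{F}_{q^2}$, $\phi_k$ is the map $(a^d+a,x)\mapsto(a^d+a+k,\ x+a^d\alpha+a\alpha^d+\alpha^{d+1})$. $\mathbb{F}_q$ is the subfield of $\mathbb{F}_{q^2}$ of order $q$; $\chi$ is the chromatic number. *)

theory Defs
  imports "HOL-Computational_Algebra.Primes"
begin

text \<open>The unique a with a^d + a = u (x -> x^d + x is a bijection under the paper's hypotheses).\<close>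
definition pre :: "nat \<Rightarrow> 'a::field \<Rightarrow> 'a" where
  "pre d u = (THE a. a ^ d + a = u)"

text \<open>Adjacency of the graph A_{q^2,d}; vertices are pairs (a^d+a, x).\<close>
definition A_adj :: "nat \<Rightarrow> 'a::field \<times> 'a \<Rightarrow> 'a \<times> 'a \<Rightarrow> bool" where
  "A_adj d v w \<longleftrightarrow> v \<noteq> w \<and>
     (let a = pre d (fst v); b = pre d (fst w) in a ^ d * b + a * b ^ d = snd v + snd w)"

text \<open>phi_k for k = alpha^d + alpha, parametrised by alpha.\<close>
definition phi :: "nat \<Rightarrow> 'a::field \<Rightarrow> 'a \<times> 'a \<Rightarrow> 'a \<times> 'a" where
  "phi d \<alpha> v = (let a = pre d (fst v) in
     (fst v + (\<alpha> ^ d + \<alpha>), snd v + a ^ d * \<alpha> + a * \<alpha> ^ d + \<alpha> ^ (d + 1)))"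

definition Fq :: "nat \<Rightarrow> 'a::field set" where
  "Fq q = {x. x ^ q = x}"

definition Jset :: "nat \<Rightarrow> nat \<Rightarrow> 'a::field \<Rightarrow> ('a \<times> 'a) set" where
  "Jset q d \<mu> = {(a ^ d + a, x1 + x2 * \<mu>) | a x1 x2.
      a \<in> Fq q \<and> x1 \<in> Fq q \<and> x2 \<in> Fq q \<and> x2 \<noteq> 0}"

definition Kset :: "nat \<Rightarrow> nat \<Rightarrow> 'a::field \<Rightarrow> ('a \<times> 'a) set" where
  "Kset q d \<mu> = (\<Union>\<beta>\<in>Fq q. phi d (\<beta> * \<mu>) ` Jset q d \<mu>)"

definition colourable :: "('v \<Rightarrow> 'v \<Rightarrow> bool) \<Rightarrow> 'v set \<Rightarrow> nat \<Rightarrow> bool" where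
  "colourable adj K m \<longleftrightarrow> (\<exists>c :: 'v \<Rightarrow> nat. (\<forall>v\<in>K. c v < m) \<and>
      (\<forall>v\<in>K. \<forall>w\<in>K. adj v w \<longrightarrow> c v \<noteq> c w))"

definition chromatic_number :: "('v \<Rightarrow> 'v \<Rightarrow> bool) \<Rightarrow> 'v set \<Rightarrow> nat" where
  "chromatic_number adj K = (LEAST m. colourable adj K m)"

end

theory Submission
  imports Defs "HOL-Number_Theory.Residues" "HOL-Computational_Algebra.Polynomial"
begin

lemma frob_add:
  fixes x y :: "'a::comm_ring_1"
  assumes p: "prime p" and c: "of_nat p = (0::'a)"
  shows "(x + y) ^ p = x ^ p + y ^ p"
proof -
  have p0: "p > 0" using p prime_gt_0_nat by blast
  have "(x + y) ^ p = (\<Sum>k\<le>p. of_nat (p choose k) * x ^ k * y ^ (p - k))"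
    by (rule binomial_ring)
  also have "\<dots> = (\<Sum>k\<in>{0,p}. of_nat (p choose k) * x ^ k * y ^ (p - k))"
  proof (rule sum.mono_neutral_right)
    show "\<forall>i\<in>{..p} - {0, p}. of_nat (p choose i) * x ^ i * y ^ (p - i) = (0::'a)"
    proof
      fix i assume i: "i \<in> {..p} - {0, p}"
      then have "p dvd (p choose i)" using dvd_choose_prime[of i p] p by auto
      then obtain r where "p choose i = p * r" by blast
      then have "of_nat (p choose i) = (0::'a)" using c by simp
      then show "of_nat (p choose i) * x ^ i * y ^ (p - i) = (0::'a)" by simp
    qed
  qed auto
  also have "\<dots> = x ^ p + y ^ p" using p0 by (simp add: add.commute)
  finally show ?thesis .
qed

lemma frob_add_pow:
  fixes x y :: "'a::comm_ring_1"
  assumes p: "prime p" and c: "of_nat p = (0::'a)"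
  shows "(x + y) ^ (p ^ k) = x ^ (p ^ k) + y ^ (p ^ k)"
proof (induction k)
  case (Suc k)
  have "(x + y) ^ (p ^ Suc k) = ((x + y) ^ (p ^ k)) ^ p"
    by (simp add: power_mult[symmetric] mult.commute)
  also have "\<dots> = (x ^ (p ^ k)) ^ p + (y ^ (p ^ k)) ^ p" using Suc frob_add[OF p c] by simp
  also have "\<dots> = x ^ (p ^ Suc k) + y ^ (p ^ Suc k)"
    by (simp add: power_mult[symmetric] mult.commute)
  finally show ?case .
qed simp

lemma card_Fq_aux:
  fixes q :: nat assumes "q \<ge> 2"
  shows "card {x::'a::field. x ^ q = x} \<le> q"
proof -
  let ?P = "monom (1::'a) q + [:0,-1:]"
  have dq: "degree ?P = q" using assms
    by (subst degree_add_eq_left) (auto simp: degree_monom_eq)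
  have "?P \<noteq> 0" using dq assms by auto
  hence "card {x. poly ?P x = 0} \<le> degree ?P" by (rule card_poly_roots_bound)
  moreover have "{x. poly ?P x = 0} = {x::'a. x ^ q = x}" by (auto simp: poly_monom)
  ultimately show ?thesis using dq by simp
qed

lemma pow_card_same:
  fixes x :: "'a :: {field,finite}"
  shows   "x ^ card (UNIV :: 'a set) = x"
proof (cases "x = 0")
  case False
  have "x * (\<Prod>y\<in>UNIV-{0}. x * y) = x * x ^ (card (UNIV :: 'a set) - 1) * \<Prod>(UNIV-{0})"
    by (simp add: prod.distrib mult_ac)
  also have "x * x ^ (card (UNIV :: 'a set) - 1) = x ^ Suc (card (UNIV :: 'a set) - 1)"
    by (subst power_Suc) auto
  also have "Suc (card (UNIV :: 'a set) - 1) = card (UNIV :: 'a set)"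
    using finite_UNIV_card_ge_0[where ?'a = 'a] by simp
  also have "(\<Prod>y\<in>UNIV-{0}. x * y) = (\<Prod>y\<in>UNIV-{0}. y)"
    by (rule prod.reindex_bij_witness[of _ "\<lambda>y. y / x" "\<lambda>y. x * y"]) (use False in auto)
  finally show ?thesis
    by simp
qed (use finite_UNIV_card_ge_0[where ?'a = 'a] in auto)

lemma char_is_p:
  fixes p n :: nat
  assumes "prime p" "n > 0" "card (UNIV :: 'a::{field,finite} set) = p ^ n"
  shows "CHAR('a) = p"
proof -
  have "CHAR('a) dvd p ^ n" using CHAR_dvd_CARD[where 'a='a] assms by simp
  moreover have "prime CHAR('a)"
    using prime_CHAR_semidom[where 'a='a] finite_imp_CHAR_pos[where 'a='a] by auto
  ultimately have "CHAR('a) dvd p" using prime_dvd_power by blast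
  then show ?thesis using assms(1) \<open>prime CHAR('a)\<close>
    by (metis primes_dvd_imp_eq)
qed

lemma pre_eq:
  fixes z :: "'a::field"
  assumes inj0: "\<forall>x::'a. x ^ d + x = 0 \<longrightarrow> x = 0"
    and fr: "\<And>x y::'a. (x + y) ^ d = x ^ d + y ^ d"
  shows "pre d (z ^ d + z) = z"
  unfolding pre_def
proof (rule the_equality)
  fix a assume a: "a ^ d + a = z ^ d + z"
  have "a ^ d = (a - z) ^ d + z ^ d" using fr[of "a - z" z] by simp
  then have "(a - z) ^ d + (a - z) = 0" using a by (simp add: algebra_simps)
  then have "a - z = 0" using inj0 by blast
  then show "a = z" by simp
qed simp

lemma phi_eval:
  fixes a X \<alpha> :: "'a::field"
  assumes inj0: "\<forall>x::'a. x ^ d + x = 0 \<longrightarrow> x = 0"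
    and fr: "\<And>x y::'a. (x + y) ^ d = x ^ d + y ^ d"
  shows "phi d \<alpha> (a ^ d + a, X) = ((a + \<alpha>) ^ d + (a + \<alpha>), X + a ^ d * \<alpha> + a * \<alpha> ^ d + \<alpha> ^ (d + 1))"
proof -
  have "pre d (fst (a ^ d + a, X)) = a" using pre_eq[OF inj0 fr, of a] by simp
  then show ?thesis unfolding phi_def Let_def fr[of a \<alpha>] by (simp add: algebra_simps)
qed

lemma lin_aux:
  fixes A B D a b X Y \<alpha> :: "'a::field"
  shows "(A + D) * (b + \<alpha>) + (a + \<alpha>) * (B + D) = X + A * \<alpha> + a * D + D * \<alpha> + (Y + B * \<alpha> + b * D + D * \<alpha>) \<Longrightarrow> A * b + a * B = X + Y"
proof -
  assume h: "(A + D) * (b + \<alpha>) + (a + \<alpha>) * (B + D) = X + A * \<alpha> + a * D + D * \<alpha> + (Y + B * \<alpha> + b * D + D * \<alpha>)"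
  have "(A + D) * (b + \<alpha>) + (a + \<alpha>) * (B + D) - (X + A * \<alpha> + a * D + D * \<alpha> + (Y + B * \<alpha> + b * D + D * \<alpha>))
     = (A * b + a * B) - (X + Y)" by (simp add: algebra_simps)
  then show ?thesis using h by simp
qed

lemma phi_adj:
  fixes a b X Y \<alpha> :: "'a::field"
  assumes inj0: "\<forall>x::'a. x ^ d + x = 0 \<longrightarrow> x = 0"
    and fr: "\<And>x y::'a. (x + y) ^ d = x ^ d + y ^ d"
    and adj: "A_adj d (phi d \<alpha> (a ^ d + a, X)) (phi d \<alpha> (b ^ d + b, Y))"
  shows "a ^ d * b + a * b ^ d = X + Y"
proof -
  have e: "(a + \<alpha>) ^ d * (b + \<alpha>) + (a + \<alpha>) * (b + \<alpha>) ^ d =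
     X + a ^ d * \<alpha> + a * \<alpha> ^ d + \<alpha> ^ (d + 1) + (Y + b ^ d * \<alpha> + b * \<alpha> ^ d + \<alpha> ^ (d + 1))"
  proof -
    have "pre d ((a + \<alpha>) ^ d + (a + \<alpha>)) = a + \<alpha>" "pre d ((b + \<alpha>) ^ d + (b + \<alpha>)) = b + \<alpha>"
      using pre_eq[OF inj0 fr] by auto
    moreover note v1 = phi_eval[where a=a and \<alpha>=\<alpha> and X=X, OF inj0 fr] and v2 = phi_eval[where a=b and \<alpha>=\<alpha> and X=Y, OF inj0 fr]
    ultimately show ?thesis
      using adj unfolding A_adj_def Let_def by (simp only: v1 v2 fst_conv snd_conv)
  qed
  have e2: "(a ^ d + \<alpha> ^ d) * (b + \<alpha>) + (a + \<alpha>) * (b ^ d + \<alpha> ^ d) =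
     X + a ^ d * \<alpha> + a * \<alpha> ^ d + \<alpha> ^ (d + 1) + (Y + b ^ d * \<alpha> + b * \<alpha> ^ d + \<alpha> ^ (d + 1))"
    using e unfolding fr[of a \<alpha>] fr[of b \<alpha>] .
  have "\<alpha> ^ (d + 1) = \<alpha> ^ d * \<alpha>" by simp
  then show ?thesis using e2 lin_aux[of "a ^ d" "\<alpha> ^ d" b \<alpha> a "b ^ d" X Y] by simp
qed

lemma Fq_closed:
  fixes x y :: "'a::field"
  assumes fr: "\<And>x y::'a. (x + y) ^ q = x ^ q + y ^ q" and q: "q > 0"
    and x: "x \<in> Fq q" and y: "y \<in> Fq q"
  shows "x + y \<in> Fq q" "-x \<in> Fq q" "x - y \<in> Fq q" "x * y \<in> Fq q" "x / y \<in> Fq q"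
proof -
  have neg: "(-z) ^ q = - (z ^ q)" for z :: 'a
  proof -
    have "(0::'a) = (z + - z) ^ q" using q by simp
    then have "0 = z ^ q + (-z) ^ q" by (simp only: fr)
    then show ?thesis by (simp add: eq_neg_iff_add_eq_0 add.commute)
  qed
  show "x + y \<in> Fq q" using x y fr by (simp add: Fq_def)
  show "-x \<in> Fq q" using x neg by (simp add: Fq_def)
  show "x - y \<in> Fq q" using x y fr[of x "-y"] neg by (simp add: Fq_def)
  show "x * y \<in> Fq q" using x y by (simp add: Fq_def power_mult_distrib)
  show "x / y \<in> Fq q" using x y by (simp add: Fq_def power_divide)
qed

lemma Fq_pow:
  fixes x :: "'a::field"
  assumes "x \<in> Fq q" shows "x ^ d \<in> Fq q"
proof -
  have "(x ^ d) ^ q = (x ^ q) ^ d" by (simp only: power_mult[symmetric] mult.commute)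
  then show ?thesis using assms by (simp add: Fq_def)
qed

theorem lemma9:
  fixes p n s :: nat and \<mu> u1 u2 :: "'a::{field,finite}"
  assumes "prime p" and "odd p" and "n > 0" and "s > 0"
    and "s dvd 2 * n" and "odd (2 * n div s)" and "2 * n div s \<ge> 3"
    and "card (UNIV :: 'a set) = (p ^ n) ^ 2"
    and "\<mu> \<notin> Fq (p ^ n)"
    and "u1 \<in> Fq (p ^ n)" and "u2 \<in> Fq (p ^ n)"
    and "\<mu> ^ (p ^ s) = u1 + u2 * \<mu>"
    and "\<exists>w::'a. u2 = w ^ (p ^ s - 1)"
  shows "chromatic_number (A_adj (p ^ s)) (Kset (p ^ n) (p ^ s) \<mu>) \<le> 2 * p ^ n"
proof -
  define q where "q = p ^ n"
  define d where "d = p ^ s"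
  define m where "m = 2 * n div s"
  define F where "F = (Fq q :: 'a set)"
  define K where "K = Kset q d \<mu>"
  have pr: "prime p" by fact
  have p3: "p \<ge> 3"
  proof -
    have "p \<ge> 2" using prime_ge_2_nat[OF pr] .
    moreover have "p \<noteq> 2" using assms(2) by auto
    ultimately show ?thesis by linarith
  qed
  have q2: "q \<ge> 2"
  proof -
    have "p ^ 1 \<le> p ^ n" using assms(3) p3 by (intro power_increasing) auto
    then show ?thesis using p3 unfolding q_def by simp
  qed
  have cardU: "card (UNIV :: 'a set) = p ^ (2 * n)" using assms(8) by (simp add: power_mult[symmetric] mult.commute)
  have CH: "CHAR('a) = p" by (rule char_is_p[OF pr _ cardU]) (use assms(3) in simp)
  have c0: "of_nat p = (0::'a)" using of_nat_CHAR[where 'a='a] CH by simp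
  have two: "(2::'a) \<noteq> 0"
  proof
    assume "(2::'a) = 0"
    then have "of_nat 2 = (0::'a)" by simp
    then have "p dvd 2" using of_nat_eq_0_iff_char_dvd[where 'a='a] CH by metis
    then show False using p3 by (auto dest: dvd_imp_le)
  qed
  have frd: "\<And>x y::'a. (x + y) ^ d = x ^ d + y ^ d" unfolding d_def by (rule frob_add_pow[OF pr c0])
  have frq: "\<And>x y::'a. (x + y) ^ q = x ^ q + y ^ q" unfolding q_def by (rule frob_add_pow[OF pr c0])
  have negd: "(-z) ^ d = - (z ^ d)" for z :: 'a
  proof -
    have "d > 0" unfolding d_def using p3 by simp
    then have "(0::'a) = (z + - z) ^ d" by simp
    then have "0 = z ^ d + (-z) ^ d" by (simp only: frd)
    then show ?thesis by (simp add: eq_neg_iff_add_eq_0 add.commute)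
  qed
  have dm: "d ^ m = card (UNIV :: 'a set)"
  proof -
    have "s * m = 2 * n" unfolding m_def using assms(5) by simp
    then show ?thesis unfolding d_def cardU by (simp add: power_mult[symmetric])
  qed
  have inj0: "\<And>x::'a. x ^ d + x = 0 \<Longrightarrow> x = 0"
  proof -
    fix x :: 'a assume h: "x ^ d + x = 0"
    then have xd: "x ^ d = - x" by (simp add: eq_neg_iff_add_eq_0)
    have "x ^ (d ^ k) = (if even k then x else - x)" for k
    proof (induction k)
      case (Suc k)
      have "x ^ (d ^ Suc k) = (x ^ (d ^ k)) ^ d" by (simp add: power_mult[symmetric] mult.commute)
      show ?case
      proof (cases "even k")
        case True
        then show ?thesis using \<open>x ^ (d ^ Suc k) = _\<close> Suc.IH xd by simp
      next
        case False
        then show ?thesis using \<open>x ^ (d ^ Suc k) = _\<close> Suc.IH negd[of x] xd by simp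
      qed
    qed simp
    then have "x ^ (d ^ m) = - x" using assms(6) unfolding m_def by simp
    moreover have "x ^ (d ^ m) = x" unfolding dm by (rule pow_card_same)
    ultimately have "x + x = 0" by (metis add.right_inverse)
    then have "2 * x = 0" by (simp only: mult_2)
    then show "x = 0" using two by simp
  qed
  have inj0': "\<forall>x::'a. x ^ d + x = 0 \<longrightarrow> x = 0" using inj0 by blast
  have q0: "q > 0" using q2 by simp
  note FC = Fq_closed[OF frq q0]
  have muF: "\<mu> \<notin> F" using assms(9) unfolding F_def q_def .
  have finF: "finite F" by simp
  have cardF: "card F \<le> q" unfolding F_def Fq_def by (rule card_Fq_aux[OF q2])
  obtain h where h: "bij_betw h F {0..<card F}" using ex_bij_betw_finite_nat[OF finF] by blast
  obtain g :: "'a \<Rightarrow> nat" where g: "inj g"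
    using finite_imp_inj_to_nat_seg[of "UNIV :: 'a set"] by auto
  define P :: "'a \<times> 'a \<Rightarrow> 'a \<times> 'a \<times> 'a \<times> 'a \<Rightarrow> bool" where
    "P = (\<lambda>v (\<beta>, a, x1, x2). \<beta> \<in> F \<and> a \<in> F \<and> x1 \<in> F \<and> x2 \<in> F \<and> x2 \<noteq> 0 \<and>
          v = phi d (\<beta> * \<mu>) (a ^ d + a, x1 + x2 * \<mu>))"
  define col where "col = (\<lambda>v. case (SOME t. P v t) of (\<beta>, a, x1, x2) \<Rightarrow>
      2 * h \<beta> + (if g x2 < g (-x2) then 1 else (0::nat)))"
  have ex: "\<exists>t. P v t" if "v \<in> K" for v
  proof -
    from that obtain \<beta> w where b: "\<beta> \<in> F" and w: "w \<in> Jset q d \<mu>" and v: "v = phi d (\<beta> * \<mu>) w"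
      unfolding K_def Kset_def F_def by blast
    from w obtain a x1 x2 where "w = (a ^ d + a, x1 + x2 * \<mu>)" "a \<in> F" "x1 \<in> F" "x2 \<in> F" "x2 \<noteq> 0"
      unfolding Jset_def F_def by blast
    then have "P v (\<beta>, a, x1, x2)" using b v unfolding P_def by simp
    then show ?thesis by blast
  qed
  have getP: "\<exists>\<beta> a x1 x2. (SOME t. P v t) = (\<beta>, a, x1, x2) \<and> P v (\<beta>, a, x1, x2)" if "v \<in> K" for v
  proof -
    have "P v (SOME t. P v t)" by (rule someI_ex[OF ex[OF that]])
    moreover obtain \<beta> a x1 x2 where "(SOME t. P v t) = (\<beta>, a, x1, x2)" by (cases "SOME t. P v t") auto
    ultimately show ?thesis by auto
  qed
  have col_bound: "col v < 2 * q" if vK: "v \<in> K" for v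
  proof -
    obtain \<beta> a x1 x2 where t: "(SOME t. P v t) = (\<beta>, a, x1, x2)" and pt: "P v (\<beta>, a, x1, x2)"
      using getP[OF vK] by blast
    have "\<beta> \<in> F" using pt unfolding P_def by simp
    then have "h \<beta> < card F" using h by (auto simp: bij_betw_def)
    then show ?thesis unfolding col_def t using cardF by auto
  qed
  have col_proper: "col v \<noteq> col w" if vK: "v \<in> K" and wK: "w \<in> K" and adj: "A_adj d v w" for v w
  proof
    assume eq: "col v = col w"
    obtain \<beta> a x1 x2 where t: "(SOME t. P v t) = (\<beta>, a, x1, x2)" and pt: "P v (\<beta>, a, x1, x2)"
      using getP[OF vK] by blast
    obtain \<beta>' b y1 y2 where t': "(SOME t. P w t) = (\<beta>', b, y1, y2)" and pt': "P w (\<beta>', b, y1, y2)"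
      using getP[OF wK] by blast
    have F1: "\<beta> \<in> F" "a \<in> F" "x1 \<in> F" "x2 \<in> F" "x2 \<noteq> 0" "v = phi d (\<beta> * \<mu>) (a ^ d + a, x1 + x2 * \<mu>)"
      using pt unfolding P_def by auto
    have F2: "\<beta>' \<in> F" "b \<in> F" "y1 \<in> F" "y2 \<in> F" "y2 \<noteq> 0" "w = phi d (\<beta>' * \<mu>) (b ^ d + b, y1 + y2 * \<mu>)"
      using pt' unfolding P_def by auto
    define e where "e = (if g x2 < g (-x2) then 1 else (0::nat))"
    define e' where "e' = (if g y2 < g (-y2) then 1 else (0::nat))"
    have "2 * h \<beta> + e = 2 * h \<beta>' + e'" using eq unfolding col_def t t' e_def e'_def by simp
    moreover have "e \<le> 1" "e' \<le> 1" unfolding e_def e'_def by auto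
    ultimately have hh: "h \<beta> = h \<beta>'" and ee: "e = e'" by presburger+
    have bb: "\<beta> = \<beta>'" using hh h F1(1) F2(1) by (auto simp: bij_betw_def inj_on_def)
    have L: "a ^ d * b + a * b ^ d = (x1 + x2 * \<mu>) + (y1 + y2 * \<mu>)"
    proof -
      have "A_adj d (phi d (\<beta> * \<mu>) (a ^ d + a, x1 + x2 * \<mu>)) (phi d (\<beta> * \<mu>) (b ^ d + b, y1 + y2 * \<mu>))"
        using adj F1(6) F2(6) bb by simp
      note th = phi_adj[where d=d and a=a and b=b and \<alpha>="\<beta> * \<mu>" and X="x1 + x2 * \<mu>" and Y="y1 + y2 * \<mu>"]
      show ?thesis by (rule th[OF inj0' frd]) fact
    qed
    have LF: "a ^ d * b + a * b ^ d \<in> F"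
    proof -
      have "a ^ d \<in> F" "b ^ d \<in> F" using F1(2) F2(2) Fq_pow unfolding F_def by auto
      then have "a ^ d * b \<in> F" "a * b ^ d \<in> F" using F1(2) F2(2) FC(4) unfolding F_def by auto
      then show ?thesis using FC(1) unfolding F_def by auto
    qed
    show False
    proof (cases "x2 + y2 = 0")
      case True
      then have y2: "y2 = - x2" by (simp add: eq_neg_iff_add_eq_0 add.commute)
      have "x2 \<noteq> - x2"
      proof
        assume "x2 = - x2"
        then have "x2 + x2 = 0" by (metis add.right_inverse)
        then have "2 * x2 = 0" by (simp only: mult_2)
        then show False using F1(5) two by simp
      qed
      then have "g x2 \<noteq> g (- x2)" using g unfolding inj_def by blast
      then have "e \<noteq> e'" unfolding e_def e'_def y2 by auto
      then show False using ee by simp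
    next
      case False
      have L2: "a ^ d * b + a * b ^ d - (x1 + y1) = (x2 + y2) * \<mu>"
        unfolding L by (simp add: algebra_simps)
      have "\<mu> = (a ^ d * b + a * b ^ d - (x1 + y1)) / (x2 + y2)"
        unfolding L2 using False by simp
      moreover have "x1 + y1 \<in> F" "x2 + y2 \<in> F" using F1 F2 FC unfolding F_def by auto
      moreover have "a ^ d * b + a * b ^ d - (x1 + y1) \<in> F" using LF \<open>x1 + y1 \<in> F\<close> FC(3) unfolding F_def by auto
      ultimately have "\<mu> \<in> F" using FC(5) unfolding F_def by metis
      then show False using muF by simp
    qed
  qed
  have "colourable (A_adj d) K (2 * q)"
    unfolding colourable_def using col_bound col_proper by blast
  then have "chromatic_number (A_adj d) K \<le> 2 * q"
    unfolding chromatic_number_def by (rule Least_le)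
  then show ?thesis unfolding K_def q_def d_def .
qed

end
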